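(* Let $R$ be an associative ring with identity and involution $*$, and let $a\in R^{\#}\cap R^{\dagger}$. Then $a\in R^{SEP}$ if and only if $a(a^{\#})^*a^{\dagger}$ and $a^{\dagger}a^2$ are left $a^{\dagger}a^2$-equivalent, i.e. $a^{\dagger}a^2\,a(a^{\#})^*a^{\dagger}=a^{\dagger}a^2\,a^{\dagger}a^2$.
   Context: An involution on $R$ is a map $x\mapsto x^*$ with $(x^* )^*=x$, $(x+y)^*=x^*+y^*$, $(xy)^*=y^*x^*$. An element $a$ is Moore–Penrose invertible if there is $b$ with $aba=a$, $bab=b$, $(ab)^*=ab$, $(ba)^*=ba$; such $b$ is unique, denoted $a^{\dagger}$, and $R^{\dagger}$ is the set of such $a$. An element $a$ is group invertible if there is $b$ with $aba=a$, $bab=b$, $ab=ba$; such $b$ is unique, denoted $a^{\#}$, and $R^{\#}$ is the set of such $a$. For $a\in R^{\#}\cap R^{\dagger}$, $a$ is SEP if $a^*=a^{\dagger}=a^{\#}$; $R^{SEP}$ denotes the set of SEP elements. For $x,b,c\in R$, $b$ and $c$ are left $x$-equivalent if $xb=xc$. *)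

theory Defs
  imports Main
begin

definition involution :: "('a::ring_1 \<Rightarrow> 'a) \<Rightarrow> bool" where
  "involution s \<longleftrightarrow> (\<forall>x. s (s x) = x) \<and> (\<forall>x y. s (x + y) = s x + s y)
      \<and> (\<forall>x y. s (x * y) = s y * s x)"

definition is_mp_inverse :: "('a::ring_1 \<Rightarrow> 'a) \<Rightarrow> 'a \<Rightarrow> 'a \<Rightarrow> bool" where
  "is_mp_inverse s a b \<longleftrightarrow> a * b * a = a \<and> b * a * b = b \<and> s (a * b) = a * b \<and> s (b * a) = b * a"

definition mp_invertible :: "('a::ring_1 \<Rightarrow> 'a) \<Rightarrow> 'a \<Rightarrow> bool" where
  "mp_invertible s a \<longleftrightarrow> (\<exists>b. is_mp_inverse s a b)"

definition mp_inv :: "('a::ring_1 \<Rightarrow> 'a) \<Rightarrow> 'a \<Rightarrow> 'a" where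
  "mp_inv s a = (THE b. is_mp_inverse s a b)"

definition is_group_inverse :: "'a::ring_1 \<Rightarrow> 'a \<Rightarrow> bool" where
  "is_group_inverse a b \<longleftrightarrow> a * b * a = a \<and> b * a * b = b \<and> a * b = b * a"

definition group_invertible :: "'a::ring_1 \<Rightarrow> bool" where
  "group_invertible a \<longleftrightarrow> (\<exists>b. is_group_inverse a b)"

definition group_inv :: "'a::ring_1 \<Rightarrow> 'a" where
  "group_inv a = (THE b. is_group_inverse a b)"

definition SEP :: "('a::ring_1 \<Rightarrow> 'a) \<Rightarrow> 'a \<Rightarrow> bool" where
  "SEP s a \<longleftrightarrow> group_invertible a \<and> mp_invertible s a
      \<and> s a = mp_inv s a \<and> mp_inv s a = group_inv a"

definition left_equiv :: "'a::ring_1 \<Rightarrow> 'a \<Rightarrow> 'a \<Rightarrow> bool" where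
  "left_equiv x b c \<longleftrightarrow> x * b = x * c"

end

theory Submission
  imports Defs
begin

lemma mp_unique:
  fixes s :: "'a::ring_1 \<Rightarrow> 'a"
  assumes inv: "involution s" and b: "is_mp_inverse s a b" and c: "is_mp_inverse s a c"
  shows "b = c"
proof -
  have sm: "\<And>x y. s (x * y) = s y * s x" using inv by (simp add: involution_def)
  have b1: "a * b * a = a" "b * a * b = b" "s (a * b) = a * b" "s (b * a) = b * a"
    using b by (auto simp: is_mp_inverse_def)
  have c1: "a * c * a = a" "c * a * c = c" "s (a * c) = a * c" "s (c * a) = c * a"
    using c by (auto simp: is_mp_inverse_def)
  have "b = b * (a * b)" using b1 by (simp add: mult.assoc)
  also have "\<dots> = b * s b * s a" using b1 sm by (metis mult.assoc)
  also have "\<dots> = b * s b * s (a * c * a)" using c1 by simp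
  also have "\<dots> = b * s b * s a * s (a * c)" using sm by (simp add: mult.assoc)
  also have "\<dots> = b * s (a * b) * s (a * c)" using sm by (simp add: mult.assoc)
  also have "\<dots> = b * a * b * a * c" using b1 c1 by (simp add: mult.assoc)
  also have "\<dots> = b * a * c" using b1 by simp
  finally have B: "b = b * a * c" .
  have "c = (c * a) * c" using c1 by simp
  also have "\<dots> = s a * s c * c" using c1 sm by metis
  also have "\<dots> = s (a * b * a) * s c * c" using b1 by simp
  also have "\<dots> = s (b * a) * s a * s c * c" using sm by (simp add: mult.assoc)
  also have "\<dots> = s (b * a) * s (c * a) * c" using sm by (simp add: mult.assoc)
  also have "\<dots> = b * a * (c * a * c)" using b1 c1 by (simp add: mult.assoc)
  also have "\<dots> = b * a * c" using c1 by simp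
  finally show ?thesis using B by simp
qed

lemma mp_inv_eq:
  assumes "involution s" "is_mp_inverse s a b"
  shows "mp_inv s a = b"
  unfolding mp_inv_def using assms mp_unique by blast

lemma group_unique:
  fixes a :: "'a::ring_1"
  assumes b: "is_group_inverse a b" and c: "is_group_inverse a c"
  shows "b = c"
proof -
  have b1: "a * b * a = a" "b * a * b = b" "a * b = b * a"
    using b by (auto simp: is_group_inverse_def)
  have c1: "a * c * a = a" "c * a * c = c" "a * c = c * a"
    using c by (auto simp: is_group_inverse_def)
  have e1: "b * a = a * c"
  proof -
    have "b * a = b * (a * c * a)" by (metis c1(1))
    also have "\<dots> = (b * a) * (a * c)" by (metis c1(3) mult.assoc)
    also have "\<dots> = (a * b) * (a * c)" using b1 by simp
    also have "\<dots> = a * c" by (metis b1(1) mult.assoc)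
    finally show ?thesis .
  qed
  have e2: "c * a = a * b"
  proof -
    have "c * a = c * (a * b * a)" by (metis b1(1))
    also have "\<dots> = (c * a) * (a * b)" by (metis b1(3) mult.assoc)
    also have "\<dots> = (a * c) * (a * b)" using c1 by simp
    also have "\<dots> = a * b" by (metis c1(1) mult.assoc)
    finally show ?thesis .
  qed
  have "b = b * (a * b)" using b1 by (simp add: mult.assoc)
  also have "\<dots> = b * (a * c)" using e1 b1 by simp
  also have "\<dots> = (a * c) * c" by (metis e1 mult.assoc)
  also have "\<dots> = c" using c1 by simp
  finally show ?thesis .
qed

lemma group_inv_eq:
  assumes "is_group_inverse a b"
  shows "group_inv a = b"
  unfolding group_inv_def using assms group_unique by blast

theorem theorem5p3:
  fixes s :: "'a::ring_1 \<Rightarrow> 'a" and a :: 'a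
  assumes "involution s"
    and "group_invertible a" and "mp_invertible s a"
  shows "SEP s a \<longleftrightarrow>
    left_equiv (mp_inv s a * a ^ 2) (a * s (group_inv a) * mp_inv s a) (mp_inv s a * a ^ 2)"
proof -
  have sm: "\<And>x y. s (x * y) = s y * s x" and ss: "\<And>x. s (s x) = x"
    using assms(1) by (auto simp: involution_def)
  obtain g where gi: "is_group_inverse a g" using assms(2) group_invertible_def by blast
  obtain x where xi: "is_mp_inverse s a x" using assms(3) mp_invertible_def by blast
  have G: "group_inv a = g" using group_inv_eq gi by blast
  have X: "mp_inv s a = x" using mp_inv_eq assms(1) xi by blast
  have g1: "a * g * a = a" "g * a * g = g" "a * g = g * a"
    using gi by (auto simp: is_group_inverse_def)
  have x1: "a * x * a = a" "x * a * x = x" "s (a * x) = a * x" "s (x * a) = x * a"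
    using xi by (auto simp: is_mp_inverse_def)
  have ga2: "g * (a * a) = a" using g1 by (metis mult.assoc)
  have a2g: "a * a * g = a" using g1 by (metis mult.assoc)
  show ?thesis
  proof
    assume "SEP s a"
    then have sa: "s a = x" "x = g" using G X by (auto simp: SEP_def)
    have sg: "s g = a" using sa ss by metis
    have "x * a ^ 2 * (a * s g * x) = (g * (a * a)) * (a * a * g)"
      using sa sg by (simp add: power2_eq_square mult.assoc)
    also have "\<dots> = (g * (a * a)) * (g * (a * a))" using ga2 a2g by simp
    finally show "left_equiv (mp_inv s a * a ^ 2) (a * s (group_inv a) * mp_inv s a) (mp_inv s a * a ^ 2)"
      using G X sa by (simp add: left_equiv_def power2_eq_square mult.assoc)
  next
    assume "left_equiv (mp_inv s a * a ^ 2) (a * s (group_inv a) * mp_inv s a) (mp_inv s a * a ^ 2)"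
    then have H: "x * (a * a) * (a * s g * x) = x * (a * a) * (x * (a * a))"
      using G X by (simp add: left_equiv_def power2_eq_square)
    have "x * (a * a) * (x * (a * a)) = x * (a * (a * x * a) * a)" by (simp add: mult.assoc)
    also have "\<dots> = x * (a * a * a)" by (metis x1(1) mult.assoc)
    finally have H2: "x * (a * a) * (a * s g * x) = x * (a * a * a)" using H by simp
    have "a * (x * (a * a) * (a * s g * x)) = (a * x * a) * a * a * s g * x" by (simp add: mult.assoc)
    moreover have "a * (x * (a * a * a)) = (a * x * a) * a * a" by (simp add: mult.assoc)
    ultimately have H3: "a * a * a * s g * x = a * a * a" using H2 x1 by simp
    have "g * (a * a * a * s g * x) = (g * (a * a)) * a * s g * x" by (simp add: mult.assoc)
    moreover have "g * (a * a * a) = (g * (a * a)) * a" by (simp add: mult.assoc)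
    ultimately have H4: "a * a * s g * x = a * a" using H3 ga2 by simp
    have "g * (a * a * s g * x) = (g * (a * a)) * s g * x" by (simp add: mult.assoc)
    then have H5: "a * s g * x = a" using H4 ga2 by simp
    have "a * s g * x * a * x = a * a * x" using H5 by simp
    then have a2x: "a * a * x = a" using H5 x1 by (simp add: mult.assoc)
    have "g * a = g * (a * a * x)" using a2x by simp
    also have "\<dots> = a * x" by (metis ga2 mult.assoc)
    finally have gax: "g * a = a * x" .
    have gmp: "is_mp_inverse s a g" unfolding is_mp_inverse_def
      using g1 gax x1 by simp
    have xg: "x = g" using mp_unique[OF assms(1) xi gmp] .
    define p where "p = a * g"
    have sp: "s p = p" using p_def x1 gax g1 by simp
    have pg: "p * g = g" "g * p = g" using p_def g1 by (simp_all add: mult.assoc)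
    have sgp: "s g * p = s g" using sm[of p g] sp pg by simp
    have psg: "p * s g = s g" using sm[of g p] sp pg by simp
    have "a * s g * g * a = a * a" using H5 xg by simp
    then have "a * s g * p = a * a" using p_def g1 by (simp add: mult.assoc)
    then have asg: "a * s g = a * a" using sgp by (simp add: mult.assoc)
    have "g * (a * s g) = p * s g" using p_def g1 by (simp add: mult.assoc)
    then have "s g = a" using asg psg ga2 by simp
    then have "s a = g" using ss by metis
    then show "SEP s a" unfolding SEP_def using assms(2,3) G X xg by simp
  qed
qed

end
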